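(* Let $(A;R)\in\mathcal C$, let $t:R\to A$ be a transversal with image $A\setminus Y$, and work in the matroid $PG(A;R)$. For each closed set $F$ let $\beta(F)=|\{x\in F\setminus Y: \mathrm{cl}(t^{-1}(x))=F\}|$. Then $\beta(F)=\alpha(F)$ for every closed set $F$ of $PG(A;R)$.
   Context: A set system is a pair $(A;R)$ where $R$ is a set of finite non-empty subsets of $A$; for $X\subseteq A$, $R[X]=\{r\in R: r\subseteq X\}$ and $\delta(X)=|X|-|R[X]|$. $\mathcal C$ is the class of finite set systems with $\delta(X)\ge0$ for all $X\subseteq A$. For $(A;R)\in\mathcal C$ define $d(X)=\min\{\delta(Y):X\subseteq Y\subseteq A\}$ and $\mathrm{cl}(X)=\{y: d(X\cup\{y\})=d(X)\}$; $PG(A;R)$ is the matroid $(A,\mathrm{cl})$ with rank function $d$. A transversal is an injective $t:R\to A$ with $t(r)\in r$ for all $r$. A closed set is $F$ with $\mathrm{cl}(F)=F$. The $\alpha$-function of a matroid is defined on unions of closed sets $X$ recursively by $\alpha(X)=|X|-d(X)-\sum_G\alpha(G)$, the sum over closed $G\subsetneq X$. *)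

theory Defs
  imports Main
begin

definition set_system :: "'a set \<Rightarrow> 'a set set \<Rightarrow> bool" where
  "set_system A R \<longleftrightarrow> (\<forall>r\<in>R. finite r \<and> r \<noteq> {} \<and> r \<subseteq> A)"

definition relsIn :: "'a set set \<Rightarrow> 'a set \<Rightarrow> 'a set set" where
  "relsIn R X = {r\<in>R. r \<subseteq> X}"

definition delta :: "'a set set \<Rightarrow> 'a set \<Rightarrow> int" where
  "delta R X = int (card X) - int (card (relsIn R X))"

definition classC :: "'a set \<Rightarrow> 'a set set \<Rightarrow> bool" where
  "classC A R \<longleftrightarrow> finite A \<and> set_system A R \<and> (\<forall>X\<subseteq>A. delta R X \<ge> 0)"

definition dd :: "'a set \<Rightarrow> 'a set set \<Rightarrow> 'a set \<Rightarrow> int" where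
  "dd A R X = Min (delta R ` {Y. X \<subseteq> Y \<and> Y \<subseteq> A})"

definition cl :: "'a set \<Rightarrow> 'a set set \<Rightarrow> 'a set \<Rightarrow> 'a set" where
  "cl A R X = {y\<in>A. dd A R (X \<union> {y}) = dd A R X}"

definition closed :: "'a set \<Rightarrow> 'a set set \<Rightarrow> 'a set \<Rightarrow> bool" where
  "closed A R F \<longleftrightarrow> cl A R F = F"

definition transversal :: "'a set \<Rightarrow> 'a set set \<Rightarrow> ('a set \<Rightarrow> 'a) \<Rightarrow> bool" where
  "transversal A R t \<longleftrightarrow> inj_on t R \<and> (\<forall>r\<in>R. t r \<in> r)"

function alpha :: "'a set \<Rightarrow> 'a set set \<Rightarrow> 'a set \<Rightarrow> int" where
  "alpha A R X =
     (if finite X then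
        int (card X) - dd A R X - (\<Sum>G\<in>{G. G \<subset> X \<and> closed A R G}. alpha A R G)
      else 0)"
  by pat_completeness auto
termination
  by (relation "measure (\<lambda>(A, R, X). card X)") (auto intro: psubset_card_mono)

definition beta :: "'a set \<Rightarrow> 'a set set \<Rightarrow> ('a set \<Rightarrow> 'a) \<Rightarrow> 'a set \<Rightarrow> 'a set \<Rightarrow> nat" where
  "beta A R t Y F = card {x \<in> F - Y. cl A R (the_inv_into R t x) = F}"

end

theory Submission
  imports Defs
begin

lemma finR: "classC A R \<Longrightarrow> finite R"
  unfolding classC_def set_system_def
  by (meson PowI finite_Pow_iff finite_subset subsetI)

lemma delta_submod:
  assumes C: "classC A R" and X: "X \<subseteq> A" and Z: "Z \<subseteq> A"
  shows "delta R (X \<union> Z) + delta R (X \<inter> Z) \<le> delta R X + delta R Z"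
proof -
  have fA: "finite A" using C classC_def by blast
  have fX: "finite X" "finite Z" using fA X Z finite_subset by auto
  have c1: "card (X \<union> Z) + card (X \<inter> Z) = card X + card Z"
    using card_Un_Int fX by metis
  have fR: "finite R" using finR C by blast
  have i: "relsIn R (X \<inter> Z) = relsIn R X \<inter> relsIn R Z" unfolding relsIn_def by auto
  have u: "relsIn R X \<union> relsIn R Z \<subseteq> relsIn R (X \<union> Z)" unfolding relsIn_def by auto
  have fr: "finite (relsIn R W)" for W unfolding relsIn_def using fR by simp
  have "card (relsIn R X) + card (relsIn R Z) = card (relsIn R X \<union> relsIn R Z) + card (relsIn R (X \<inter> Z))"
    using card_Un_Int fr i by metis
  also have "\<dots> \<le> card (relsIn R (X \<union> Z)) + card (relsIn R (X \<inter> Z))"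
    using card_mono[OF fr u] by simp
  finally show ?thesis unfolding delta_def using c1 by linarith
qed

lemma fin_sup: "finite A \<Longrightarrow> finite {Y. X \<subseteq> Y \<and> Y \<subseteq> A}"
  by (rule finite_subset[of _ "Pow A"]) auto

lemma dd_le: "classC A R \<Longrightarrow> X \<subseteq> Y \<Longrightarrow> Y \<subseteq> A \<Longrightarrow> dd A R X \<le> delta R Y"
proof -
  assume C: "classC A R" and XY: "X \<subseteq> Y" and YA: "Y \<subseteq> A"
  have f: "finite (delta R ` {Y. X \<subseteq> Y \<and> Y \<subseteq> A})"
    using C fin_sup unfolding classC_def by blast
  have "delta R Y \<in> delta R ` {Y. X \<subseteq> Y \<and> Y \<subseteq> A}" using XY YA by blast
  thus ?thesis unfolding dd_def using Min_le[OF f] by blast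
qed

lemma dd_ex: "classC A R \<Longrightarrow> X \<subseteq> A \<Longrightarrow> \<exists>Y. X \<subseteq> Y \<and> Y \<subseteq> A \<and> delta R Y = dd A R X"
proof -
  assume C: "classC A R" and X: "X \<subseteq> A"
  have f: "finite (delta R ` {Y. X \<subseteq> Y \<and> Y \<subseteq> A})"
    using C fin_sup unfolding classC_def by blast
  moreover have "delta R ` {Y. X \<subseteq> Y \<and> Y \<subseteq> A} \<noteq> {}" using X by blast
  ultimately have "dd A R X \<in> delta R ` {Y. X \<subseteq> Y \<and> Y \<subseteq> A}"
    unfolding dd_def by (rule Min_in)
  then obtain Y where "X \<subseteq> Y \<and> Y \<subseteq> A" "dd A R X = delta R Y" by blast
  then show ?thesis by metis
qed

lemma dd_mono: "classC A R \<Longrightarrow> X \<subseteq> X' \<Longrightarrow> X' \<subseteq> A \<Longrightarrow> dd A R X \<le> dd A R X'"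
proof -
  assume C: "classC A R" and a: "X \<subseteq> X'" "X' \<subseteq> A"
  obtain Y where Y: "X' \<subseteq> Y" "Y \<subseteq> A" "delta R Y = dd A R X'" using dd_ex[OF C a(2)] by blast
  have "dd A R X \<le> delta R Y" using dd_le[OF C _ Y(2), of X] a Y(1) by blast
  thus ?thesis using Y(3) by simp
qed

definition Mins where "Mins A R X = {Y. X \<subseteq> Y \<and> Y \<subseteq> A \<and> delta R Y = dd A R X}"

lemma Mins_Un:
  assumes C: "classC A R" and X: "X \<subseteq> A" and Y1: "Y1 \<in> Mins A R X" and Y2: "Y2 \<in> Mins A R X"
  shows "Y1 \<union> Y2 \<in> Mins A R X"
proof -
  have a: "X \<subseteq> Y1" "Y1 \<subseteq> A" "delta R Y1 = dd A R X" "X \<subseteq> Y2" "Y2 \<subseteq> A" "delta R Y2 = dd A R X"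
    using Y1 Y2 unfolding Mins_def by auto
  have "delta R (Y1 \<union> Y2) + delta R (Y1 \<inter> Y2) \<le> delta R Y1 + delta R Y2"
    using delta_submod[OF C a(2) a(5)] .
  moreover have "dd A R X \<le> delta R (Y1 \<inter> Y2)" using dd_le[OF C, of X "Y1 \<inter> Y2"] a by auto
  moreover have "dd A R X \<le> delta R (Y1 \<union> Y2)" using dd_le[OF C, of X "Y1 \<union> Y2"] a by auto
  ultimately show ?thesis using a unfolding Mins_def by auto
qed

lemma Mins_Union:
  assumes C: "classC A R" and X: "X \<subseteq> A"
  shows "finite S \<Longrightarrow> S \<noteq> {} \<Longrightarrow> S \<subseteq> Mins A R X \<Longrightarrow> \<Union>S \<in> Mins A R X"
proof (induction S rule: finite_ne_induct)
  case (singleton x)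
  then show ?case by auto
next
  case (insert x F)
  then show ?case using Mins_Un[OF C X] by auto
qed

lemma cl_eq:
  assumes C: "classC A R" and X: "X \<subseteq> A"
  shows "cl A R X = \<Union>(Mins A R X)"
proof
  show "cl A R X \<subseteq> \<Union>(Mins A R X)"
  proof
    fix y assume y: "y \<in> cl A R X"
    then have "y \<in> A" "dd A R (X \<union> {y}) = dd A R X" unfolding cl_def by auto
    then obtain Y where "X \<union> {y} \<subseteq> Y" "Y \<subseteq> A" "delta R Y = dd A R X"
      using dd_ex[OF C, of "X \<union> {y}"] X by auto
    then show "y \<in> \<Union>(Mins A R X)" unfolding Mins_def by auto
  qed
next
  show "\<Union>(Mins A R X) \<subseteq> cl A R X"
  proof
    fix y assume "y \<in> \<Union>(Mins A R X)"
    then obtain Y where Y: "Y \<in> Mins A R X" "y \<in> Y" by auto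
    then have a: "X \<subseteq> Y" "Y \<subseteq> A" "delta R Y = dd A R X" unfolding Mins_def by auto
    have "dd A R (X \<union> {y}) \<le> delta R Y" using dd_le[OF C, of "X \<union> {y}" Y] a Y by auto
    moreover have "dd A R X \<le> dd A R (X \<union> {y})" using dd_mono[OF C, of X "X \<union> {y}"] a Y by auto
    ultimately show "y \<in> cl A R X" unfolding cl_def using a Y by auto
  qed
qed

lemma cl_Mins:
  assumes C: "classC A R" and X: "X \<subseteq> A"
  shows "cl A R X \<in> Mins A R X"
proof -
  have fA: "finite A" using C classC_def by blast
  have "finite (Mins A R X)" unfolding Mins_def
    by (rule finite_subset[of _ "Pow A"]) (use fA in auto)
  moreover have "Mins A R X \<noteq> {}" using dd_ex[OF C X] unfolding Mins_def by auto
  ultimately show ?thesis using cl_eq[OF C X] Mins_Union[OF C X] by auto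
qed

lemma cl_closed:
  assumes C: "classC A R" and X: "X \<subseteq> A"
  shows "closed A R (cl A R X)"
proof -
  have m: "X \<subseteq> cl A R X" "cl A R X \<subseteq> A" "delta R (cl A R X) = dd A R X"
    using cl_Mins[OF C X] unfolding Mins_def by auto
  have d: "dd A R (cl A R X) = dd A R X"
    using dd_le[OF C order_refl m(2)] dd_mono[OF C m(1) m(2)] m(3) by linarith
  have "cl A R (cl A R X) = \<Union>(Mins A R (cl A R X))" using cl_eq[OF C m(2)] .
  also have "\<dots> = \<Union>(Mins A R X)"
  proof -
    have "Mins A R (cl A R X) \<subseteq> Mins A R X" using d m unfolding Mins_def by auto
    moreover have "Mins A R X \<subseteq> Pow (cl A R X)" using cl_eq[OF C X] by auto
    moreover have "Y \<in> Mins A R X \<Longrightarrow> Y \<union> cl A R X \<in> Mins A R (cl A R X)" for Y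
    proof -
      assume "Y \<in> Mins A R X"
      hence "Y \<union> cl A R X \<in> Mins A R X" using Mins_Un[OF C X _ cl_Mins[OF C X]] by blast
      thus ?thesis using d m(1) unfolding Mins_def by auto
    qed
    ultimately have "\<Union>(Mins A R (cl A R X)) \<subseteq> \<Union>(Mins A R X)"
      "\<Union>(Mins A R X) \<subseteq> \<Union>(Mins A R (cl A R X))" by blast+
    thus ?thesis by blast
  qed
  also have "\<dots> = cl A R X" using cl_eq[OF C X] by simp
  finally show ?thesis unfolding closed_def .
qed

lemma closed_sub: "closed A R F \<Longrightarrow> F \<subseteq> A"
  unfolding closed_def cl_def by auto

lemma closed_delta: "classC A R \<Longrightarrow> closed A R F \<Longrightarrow> delta R F = dd A R F"
proof -
  assume C: "classC A R" and F: "closed A R F"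
  have "cl A R F \<in> Mins A R F" using cl_Mins[OF C closed_sub[OF F]] .
  hence "delta R (cl A R F) = dd A R F" unfolding Mins_def by blast
  thus ?thesis using F unfolding closed_def by simp
qed

lemma cl_sub_closed:
  assumes C: "classC A R" and F: "closed A R F" and r: "r \<subseteq> F"
  shows "cl A R r \<subseteq> F"
proof -
  have FA: "F \<subseteq> A" using closed_sub[OF F] .
  have rA: "r \<subseteq> A" using r FA by auto
  have "Y \<subseteq> F" if Y: "Y \<in> Mins A R r" for Y
  proof -
    have a: "r \<subseteq> Y" "Y \<subseteq> A" "delta R Y = dd A R r" using Y unfolding Mins_def by auto
    have s: "delta R (Y \<union> F) + delta R (Y \<inter> F) \<le> delta R Y + delta R F"
      using delta_submod[OF C a(2) FA] .
    have "dd A R r \<le> delta R (Y \<inter> F)" using dd_le[OF C, of r "Y \<inter> F"] a r by auto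
    hence "delta R (Y \<union> F) \<le> dd A R F" using s a closed_delta[OF C F] by linarith
    moreover have "dd A R F \<le> delta R (Y \<union> F)" using dd_le[OF C] a FA by auto
    ultimately have "Y \<union> F \<in> Mins A R F" using a FA unfolding Mins_def by auto
    hence "Y \<union> F \<subseteq> cl A R F" using cl_eq[OF C FA] by auto
    thus ?thesis using F unfolding closed_def by auto
  qed
  thus ?thesis using cl_eq[OF C rA] by auto
qed

lemma sub_cl: "classC A R \<Longrightarrow> X \<subseteq> A \<Longrightarrow> X \<subseteq> cl A R X"
proof -
  assume "classC A R" "X \<subseteq> A"
  from cl_Mins[OF this] show ?thesis unfolding Mins_def by auto
qed

lemma beta_eq:
  assumes C: "classC A R" and T: "transversal A R t" and I: "t ` R = A - Y"
    and G: "closed A R G"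
  shows "beta A R t Y G = card {r\<in>R. cl A R r = G}"
proof -
  have inj: "inj_on t R" using T unfolding transversal_def by simp
  have GA: "G \<subseteq> A" using closed_sub[OF G] .
  have rA: "r \<in> R \<Longrightarrow> r \<subseteq> A" for r using C unfolding classC_def set_system_def by auto
  have "bij_betw t {r\<in>R. cl A R r = G} {x \<in> G - Y. cl A R (the_inv_into R t x) = G}"
  proof (rule bij_betw_imageI)
    show "inj_on t {r \<in> R. cl A R r = G}" by (rule inj_on_subset[OF inj]) auto
    show "t ` {r \<in> R. cl A R r = G} = {x \<in> G - Y. cl A R (the_inv_into R t x) = G}"
    proof
      show "t ` {r \<in> R. cl A R r = G} \<subseteq> {x \<in> G - Y. cl A R (the_inv_into R t x) = G}"
      proof
        fix x assume "x \<in> t ` {r \<in> R. cl A R r = G}"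
        then obtain r where r: "r \<in> R" "cl A R r = G" "x = t r" by auto
        have "t r \<in> r" using T r(1) unfolding transversal_def by simp
        hence "x \<in> G" using sub_cl[OF C rA[OF r(1)]] r by auto
        moreover have "x \<notin> Y" using I r by auto
        moreover have "the_inv_into R t x = r" using the_inv_into_f_f[OF inj r(1)] r by simp
        ultimately show "x \<in> {x \<in> G - Y. cl A R (the_inv_into R t x) = G}" using r by auto
      qed
    next
      show "{x \<in> G - Y. cl A R (the_inv_into R t x) = G} \<subseteq> t ` {r \<in> R. cl A R r = G}"
      proof
        fix x assume x: "x \<in> {x \<in> G - Y. cl A R (the_inv_into R t x) = G}"
        then have "x \<in> t ` R" using I GA by auto
        then obtain r where r: "r \<in> R" "x = t r" by auto
        have "the_inv_into R t x = r" using the_inv_into_f_f[OF inj r(1)] r by simp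
        thus "x \<in> t ` {r \<in> R. cl A R r = G}" using x r by auto
      qed
    qed
  qed
  thus ?thesis unfolding beta_def by (simp add: bij_betw_same_card)
qed

lemma card_rels:
  assumes C: "classC A R" and T: "transversal A R t" and I: "t ` R = A - Y"
    and F: "closed A R F"
  shows "int (card (relsIn R F)) = (\<Sum>G\<in>{G. G \<subseteq> F \<and> closed A R G}. int (beta A R t Y G))"
proof -
  have FA: "F \<subseteq> A" using closed_sub[OF F] .
  have fA: "finite A" using C classC_def by blast
  have fF: "finite F" using FA fA finite_subset by blast
  have rA: "r \<subseteq> A" if "r \<in> R" for r using C that unfolding classC_def set_system_def by blast
  have fS: "finite (relsIn R F)" using finR[OF C] unfolding relsIn_def by simp
  have fT: "finite {G. G \<subseteq> F \<and> closed A R G}"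
    by (rule finite_subset[of _ "Pow F"]) (blast, use fF in simp)
  have im: "cl A R ` relsIn R F \<subseteq> {G. G \<subseteq> F \<and> closed A R G}"
  proof
    fix G assume "G \<in> cl A R ` relsIn R F"
    then obtain r where r: "r \<in> R" "r \<subseteq> F" "G = cl A R r" unfolding relsIn_def by blast
    have "G \<subseteq> F" using cl_sub_closed[OF C F r(2)] r(3) by simp
    moreover have "closed A R G" using cl_closed[OF C rA[OF r(1)]] r(3) by simp
    ultimately show "G \<in> {G. G \<subseteq> F \<and> closed A R G}" by simp
  qed
  have "card (relsIn R F) = (\<Sum>r\<in>relsIn R F. 1::nat)" by simp
  also have "\<dots> = (\<Sum>G\<in>{G. G \<subseteq> F \<and> closed A R G}. \<Sum>r\<in>{r\<in>relsIn R F. cl A R r = G}. 1)"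
    using sum.group[OF fS fT im, of "\<lambda>_. 1::nat"] by (rule sym)
  also have "\<dots> = (\<Sum>G\<in>{G. G \<subseteq> F \<and> closed A R G}. beta A R t Y G)"
  proof (rule sum.cong[OF refl])
    fix G assume G: "G \<in> {G. G \<subseteq> F \<and> closed A R G}"
    have "{r\<in>relsIn R F. cl A R r = G} = {r\<in>R. cl A R r = G}"
    proof
      show "{r\<in>relsIn R F. cl A R r = G} \<subseteq> {r\<in>R. cl A R r = G}" unfolding relsIn_def by blast
      show "{r\<in>R. cl A R r = G} \<subseteq> {r\<in>relsIn R F. cl A R r = G}"
      proof
        fix r assume r: "r \<in> {r\<in>R. cl A R r = G}"
        hence "r \<subseteq> G" using sub_cl[OF C rA] by blast
        thus "r \<in> {r\<in>relsIn R F. cl A R r = G}" using r G unfolding relsIn_def by blast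
      qed
    qed
    moreover have "beta A R t Y G = card {r\<in>R. cl A R r = G}" using beta_eq[OF C T I] G by blast
    ultimately show "(\<Sum>r\<in>{r\<in>relsIn R F. cl A R r = G}. 1) = beta A R t Y G" by simp
  qed
  finally show ?thesis by (simp add: of_nat_sum)
qed

theorem mainTheorem5:
  fixes A :: "'a set" and R :: "'a set set" and t :: "'a set \<Rightarrow> 'a" and Y :: "'a set"
  assumes "classC A R"
    and "transversal A R t"
    and "t ` R = A - Y"
  shows "\<forall>F. closed A R F \<longrightarrow> int (beta A R t Y F) = alpha A R F"
proof -
  note C = assms(1)
  have fA: "finite A" using C classC_def by blast
  have "\<And>F. card F = n \<Longrightarrow> closed A R F \<Longrightarrow> int (beta A R t Y F) = alpha A R F" for n
  proof (induction n rule: less_induct)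
    case (less n F)
    have FA: "F \<subseteq> A" using closed_sub[OF less.prems(2)] .
    have fF: "finite F" using FA fA finite_subset by auto
    have IH: "G \<in> {G. G \<subset> F \<and> closed A R G} \<Longrightarrow> alpha A R G = int (beta A R t Y G)" for G
      using less.IH[of "card G" G] psubset_card_mono[OF fF] less.prems by auto
    have split: "{G. G \<subseteq> F \<and> closed A R G} = insert F {G. G \<subset> F \<and> closed A R G}"
      using less.prems by auto
    have fT: "finite {G. G \<subset> F \<and> closed A R G}"
      by (rule finite_subset[of _ "Pow F"]) (blast, use fF in simp)
    have "alpha A R F = int (card F) - dd A R F - (\<Sum>G\<in>{G. G \<subset> F \<and> closed A R G}. alpha A R G)"
      using fF by simp
    also have "\<dots> = int (card (relsIn R F)) - (\<Sum>G\<in>{G. G \<subset> F \<and> closed A R G}. int (beta A R t Y G))"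
      using closed_delta[OF C less.prems(2)] IH unfolding delta_def by simp
    also have "\<dots> = int (beta A R t Y F)"
      using card_rels[OF assms less.prems(2)] split fT by simp
    finally show ?case by simp
  qed
  thus ?thesis by blast
qed

end
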